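(* Let $X_1,\dots,X_N$ and $\sigma_1,\dots,\sigma_N$ be as in the context, and let $\widetilde{\mathcal H}$, $M_k,A_k,D_k$ and $\eta_k$ be as defined there. Let $R$ be a positive integer, let $\varepsilon\colon\{1,\dots,R\}\to\{1,*\}$ and $\iota\colon\{1,\dots,R\}\to\{1,\dots,N\}$ with $\iota(1)=\iota(R)=k$. Let $\pi\in NC(R)$ satisfy: (i) $\pi\in NC_{\mathrm{irr}}(R)$; (ii) for every block $B=(q_1<q_2<\dots<q_r)$ of $\pi$, $\iota(q_1)=\dots=\iota(q_r)$ and $\varepsilon(q_1)\ne\varepsilon(q_2)\ne\dots\ne\varepsilon(q_r)\ne\varepsilon(q_1)$. Define $\varphi_\pi\colon\{1,\dots,R\}\to\mathcal L(\widetilde{\mathcal H})$ by: $\varphi_\pi(j)=M_{\iota(j)}^{\varepsilon(j)}$ for $j\in\{1,R\}$; for $2\le j\le R-1$ with $\varepsilon(j)=1$, $\varphi_\pi(j)=D_{\iota(j)}$ if $j$ is the least element of its block of $\pi$, $A^*_{\iota(j)}$ if $j$ is the greatest element of its block, and $M_{\iota(j)}$ otherwise; for $2\le j\le R-1$ with $\varepsilon(j)=*$, $\varphi_\pi(j)=A_{\iota(j)}$ if $j$ is the least element of its block, $D^*_{\iota(j)}$ if $j$ is the greatest element of its block, and $M^*_{\iota(j)}$ otherwise. Then $$\kappa_\pi[X_{\iota(1)}^{\varepsilon(1)},\dots,X_{\iota(R)}^{\varepsilon(R)}]=\langle\varphi_\pi(1)\cdots\varphi_\pi(R)\eta_k,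\eta_k\rangle.$$
   Context: $(\mathcal M,\tau)$ is a tracial $W^*$-probability space, $X_1,\dots,X_N\in\mathcal M$ are $*$-free (bounded) $R$-diagonal elements, and $\sigma_1,\dots,\sigma_N$ are compactly supported symmetric finite positive Borel measures on $\mathbf{R}$ such that for every $k$, every $r\ge1$ and every cyclically alternating $\varepsilon(1),\dots,\varepsilon(r)\in\{1,*\}$ (i.e. $\varepsilon(j)\ne\varepsilon(j+1)$ and $\varepsilon(r)\ne\varepsilon(1)$), the free cumulant satisfies $\kappa_r(X_k^{\varepsilon(1)},\dots,X_k^{\varepsilon(r)})=\int t^r\,d\sigma_k(t)$. Here $X^1=X$, $X^*$ is the adjoint, $\kappa_n$ are free cumulants w.r.t. $\tau$ and $\kappa_\pi$ is the multiplicative extension over the blocks of $\pi$. $NC(R)$ is the set of noncrossing partitions of $\{1,\dots,R\}$, $NC_{\mathrm{irr}}(R)$ those in which $1$ and $R$ lie in the same block. Fock model: let $\{e,f\}$ be an orthonormal basis of $\mathbf{C}^2$, $H_k^e=L^2(\sigma_k)\otimes\mathbf{C}e$, $H_k^f=L^2(\sigma_k)\otimes\mathbf{C}f$, $\mathcal H=\bigoplus_{k=1}^N(H_k^e\oplus H_k^f)$, $\widetilde{\mathcal H}=\bigoplus_{n\ge1}\mathcal H^{\otimes n}$ (no vacuum), with inner product $\langle\cdot,\cdot\rangle$. Let $\mathrm{id}_k\in L^2(\sigma_k)$ be $t\mapsto t$ and $1_k$ the constant function $1$; $m_k\colon H_k^e\to H_k^f$, $m_k(F\otimes e)=(\mathrm{id}_k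 F)\otimes f$. For $v_1,\dots,v_n\in\mathcal H$: $M_k(v_1\otimes\cdots\otimes v_n)=m_k(P_{H_k^e}v_1)\otimes v_2\otimes\cdots\otimes v_n$ (so $M_k^*(v_1\otimes\cdots\otimes v_n)=m_k^*(P_{H_k^f}v_1)\otimes v_2\otimes\cdots\otimes v_n$), $A_k^*(v_1\otimes\cdots\otimes v_n)=(\mathrm{id}_k\otimes f)\otimes v_1\otimes\cdots\otimes v_n$, $D_k^*(v_1\otimes\cdots\otimes v_n)=(\mathrm{id}_k\otimes e)\otimes v_1\otimes\cdots\otimes v_n$; their adjoints are $A_k(v_1\otimes\cdots\otimes v_n)=\langle v_1,\mathrm{id}_k\otimes f\rangle v_2\otimes\cdots\otimes v_n$, $D_k(v_1\otimes\cdots\otimes v_n)=\langle v_1,\mathrm{id}_k\otimes e\rangle v_2\otimes\cdots\otimes v_n$ for $n\ge2$, and $A_kv=D_kv=0$ for $v\in\mathcal H$. Here $P_{H}$ is orthogonal projection onto $H$. For an operator $Z$, $Z^1=Z$ and $Z^*$ is its adjoint. $\eta_k=1_k\otimes e+1_k\otimes f\in\mathcal H$. *)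

theory Defs
  imports "HOL-Analysis.Analysis" "HOL-Library.Disjoint_Sets"
begin

definition NC :: "nat \<Rightarrow> nat set set \<Rightarrow> bool" where
  "NC n \<pi> \<longleftrightarrow> partition_on {1..n} \<pi> \<and>
     (\<forall>B\<in>\<pi>. \<forall>B'\<in>\<pi>. B \<noteq> B' \<longrightarrow>
        \<not> (\<exists>a b c d. a < b \<and> b < c \<and> c < d \<and> a \<in> B \<and> c \<in> B \<and> b \<in> B' \<and> d \<in> B'))"

definition NC_irr :: "nat \<Rightarrow> nat set set \<Rightarrow> bool" where
  "NC_irr n \<pi> \<longleftrightarrow> NC n \<pi> \<and> (\<exists>B\<in>\<pi>. 1 \<in> B \<and> n \<in> B)"

definition blk :: "nat set set \<Rightarrow> nat \<Rightarrow> nat set" where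
  "blk \<pi> j = (THE B. B \<in> \<pi> \<and> j \<in> B)"

datatype epsilon = EOne | EStar

definition Xpow :: "('a \<Rightarrow> 'a) \<Rightarrow> 'a \<Rightarrow> epsilon \<Rightarrow> 'a" where
  "Xpow st x e = (case e of EOne \<Rightarrow> x | EStar \<Rightarrow> st x)"

definition cyc_alt :: "epsilon list \<Rightarrow> bool" where
  "cyc_alt es \<longleftrightarrow> (\<forall>i<length es. es ! i \<noteq> es ! ((i + 1) mod length es))"

text \<open>A complex *-algebra is modelled as a unital ring 'a together with a central
  unital embedding sc of the scalars and an involution st; tau is a faithful
  positive tracial state.\<close>
definition tracial_star_prob_space ::
  "(complex \<Rightarrow> 'a::ring_1) \<Rightarrow> ('a \<Rightarrow> 'a) \<Rightarrow> ('a \<Rightarrow> complex) \<Rightarrow> bool" where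
  "tracial_star_prob_space sc st \<tau> \<longleftrightarrow>
     (\<forall>a b. sc (a + b) = sc a + sc b) \<and> (\<forall>a b. sc (a * b) = sc a * sc b) \<and> sc 1 = 1 \<and>
     (\<forall>c x. sc c * x = x * sc c) \<and>
     (\<forall>x. st (st x) = x) \<and> (\<forall>x y. st (x + y) = st x + st y) \<and>
     (\<forall>x y. st (x * y) = st y * st x) \<and> (\<forall>c. st (sc c) = sc (cnj c)) \<and>
     (\<forall>x y. \<tau> (x + y) = \<tau> x + \<tau> y) \<and> (\<forall>c x. \<tau> (sc c * x) = c * \<tau> x) \<and> \<tau> 1 = 1 \<and>
     (\<forall>x y. \<tau> (x * y) = \<tau> (y * x)) \<and>
     (\<forall>x. Im (\<tau> (st x * x)) = 0 \<and> Re (\<tau> (st x * x)) \<ge> 0) \<and>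
     (\<forall>x. \<tau> (st x * x) = 0 \<longrightarrow> x = 0)"

inductive_set salg for sc :: "complex \<Rightarrow> 'a::ring_1" and st :: "'a \<Rightarrow> 'a" and x :: 'a where
  scal: "sc c \<in> salg sc st x"
| gen: "x \<in> salg sc st x"
| genst: "st x \<in> salg sc st x"
| add: "a \<in> salg sc st x \<Longrightarrow> b \<in> salg sc st x \<Longrightarrow> a + b \<in> salg sc st x"
| mult: "a \<in> salg sc st x \<Longrightarrow> b \<in> salg sc st x \<Longrightarrow> a * b \<in> salg sc st x"

definition star_free ::
  "(complex \<Rightarrow> 'a::ring_1) \<Rightarrow> ('a \<Rightarrow> 'a) \<Rightarrow> ('a \<Rightarrow> complex) \<Rightarrow> nat \<Rightarrow> (nat \<Rightarrow> 'a) \<Rightarrow> bool" where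
  "star_free sc st \<tau> N X \<longleftrightarrow>
     (\<forall>is as. length is = length as \<and> is \<noteq> [] \<and>
        (\<forall>j<length is. is ! j \<in> {1..N} \<and> as ! j \<in> salg sc st (X (is ! j)) \<and> \<tau> (as ! j) = 0) \<and>
        (\<forall>j. Suc j < length is \<longrightarrow> is ! j \<noteq> is ! Suc j)
        \<longrightarrow> \<tau> (prod_list as) = 0)"

definition kappa_pi :: "('a list \<Rightarrow> complex) \<Rightarrow> nat set set \<Rightarrow> (nat \<Rightarrow> 'a) \<Rightarrow> complex" where
  "kappa_pi \<kappa> \<pi> x = (\<Prod>B\<in>\<pi>. \<kappa> (map x (sorted_list_of_set B)))"

text \<open>kappa is the family of free cumulants of tau: the moment-cumulant formula
  (which determines kappa on nonempty lists uniquely)\<close>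
definition free_cumulants :: "('a::monoid_mult \<Rightarrow> complex) \<Rightarrow> ('a list \<Rightarrow> complex) \<Rightarrow> bool" where
  "free_cumulants \<tau> \<kappa> \<longleftrightarrow>
     (\<forall>xs. xs \<noteq> [] \<longrightarrow>
        \<tau> (prod_list xs) = (\<Sum>\<pi>\<in>{\<pi>. NC (length xs) \<pi>}. kappa_pi \<kappa> \<pi> (\<lambda>j. xs ! (j - 1))))"

definition R_diagonal :: "('a \<Rightarrow> 'a) \<Rightarrow> ('a list \<Rightarrow> complex) \<Rightarrow> 'a \<Rightarrow> bool" where
  "R_diagonal st \<kappa> x \<longleftrightarrow>
     (\<forall>es. es \<noteq> [] \<and> \<not> cyc_alt es \<longrightarrow> \<kappa> (map (Xpow st x) es) = 0)"

datatype col = Ce | Cf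

text \<open>A letter (k, c, F) stands for the vector F \<otimes> c in H_k^c = L^2(sigma_k) \<otimes> C c.
  Vectors of the Fock space (without vacuum) are represented as finite formal
  linear combinations of elementary tensors v_1 \<otimes> ... \<otimes> v_n (n \<ge> 1).\<close>
type_synonym letter = "nat \<times> col \<times> (real \<Rightarrow> complex)"
type_synonym word = "letter list"
type_synonym fvec = "(complex \<times> word) list"

definition linner :: "(nat \<Rightarrow> real measure) \<Rightarrow> letter \<Rightarrow> letter \<Rightarrow> complex" where
  "linner \<sigma> v w = (case v of (k, c, F) \<Rightarrow> case w of (k', c', G) \<Rightarrow>
      if k = k' \<and> c = c' then (LINT t|\<sigma> k. F t * cnj (G t)) else 0)"

definition winner :: "(nat \<Rightarrow> real measure) \<Rightarrow> word \<Rightarrow> word \<Rightarrow> complex" where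
  "winner \<sigma> u w = (if length u = length w then (\<Prod>(a, b)\<leftarrow>zip u w. linner \<sigma> a b) else 0)"

definition finner :: "(nat \<Rightarrow> real measure) \<Rightarrow> fvec \<Rightarrow> fvec \<Rightarrow> complex" where
  "finner \<sigma> v w = sum_list [a * cnj b * winner \<sigma> u u'. (a, u) \<leftarrow> v, (b, u') \<leftarrow> w]"

definition app :: "(word \<Rightarrow> fvec) \<Rightarrow> fvec \<Rightarrow> fvec" where
  "app T v = concat (map (\<lambda>(a, u). map (\<lambda>(b, u'). (a * b, u')) (T u)) v)"

definition idf :: "real \<Rightarrow> complex" where "idf t = complex_of_real t"

fun opM :: "nat \<Rightarrow> word \<Rightarrow> fvec" where
  "opM k [] = []"
| "opM k ((k', c, F) # vs) =
     (if k' = k \<and> c = Ce then [(1, (k, Cf, \<lambda>t. idf t * F t) # vs)] else [])"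

fun opMstar :: "nat \<Rightarrow> word \<Rightarrow> fvec" where
  "opMstar k [] = []"
| "opMstar k ((k', c, F) # vs) =
     (if k' = k \<and> c = Cf then [(1, (k, Ce, \<lambda>t. idf t * F t) # vs)] else [])"

definition opAstar :: "nat \<Rightarrow> word \<Rightarrow> fvec" where
  "opAstar k w = [(1, (k, Cf, idf) # w)]"

definition opDstar :: "nat \<Rightarrow> word \<Rightarrow> fvec" where
  "opDstar k w = [(1, (k, Ce, idf) # w)]"

fun opA :: "(nat \<Rightarrow> real measure) \<Rightarrow> nat \<Rightarrow> word \<Rightarrow> fvec" where
  "opA \<sigma> k [] = []"
| "opA \<sigma> k (v # vs) = (if vs = [] then [] else [(linner \<sigma> v (k, Cf, idf), vs)])"

fun opD :: "(nat \<Rightarrow> real measure) \<Rightarrow> nat \<Rightarrow> word \<Rightarrow> fvec" where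
  "opD \<sigma> k [] = []"
| "opD \<sigma> k (v # vs) = (if vs = [] then [] else [(linner \<sigma> v (k, Ce, idf), vs)])"

definition eta :: "nat \<Rightarrow> fvec" where
  "eta k = [(1, [(k, Ce, \<lambda>_. 1)]), (1, [(k, Cf, \<lambda>_. 1)])]"

definition phi :: "(nat \<Rightarrow> real measure) \<Rightarrow> nat \<Rightarrow> (nat \<Rightarrow> epsilon) \<Rightarrow> (nat \<Rightarrow> nat)
    \<Rightarrow> nat set set \<Rightarrow> nat \<Rightarrow> word \<Rightarrow> fvec" where
  "phi \<sigma> R \<epsilon> \<iota> \<pi> j =
     (if j = 1 \<or> j = R then (if \<epsilon> j = EOne then opM (\<iota> j) else opMstar (\<iota> j))
      else if \<epsilon> j = EOne then
        (if j = Min (blk \<pi> j) then opD \<sigma> (\<iota> j)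
         else if j = Max (blk \<pi> j) then opAstar (\<iota> j) else opM (\<iota> j))
      else
        (if j = Min (blk \<pi> j) then opA \<sigma> (\<iota> j)
         else if j = Max (blk \<pi> j) then opDstar (\<iota> j) else opMstar (\<iota> j)))"

definition phi_prod :: "(nat \<Rightarrow> real measure) \<Rightarrow> nat \<Rightarrow> (nat \<Rightarrow> epsilon) \<Rightarrow> (nat \<Rightarrow> nat)
    \<Rightarrow> nat set set \<Rightarrow> fvec \<Rightarrow> fvec" where
  "phi_prod \<sigma> R \<epsilon> \<iota> \<pi> v = foldr (\<lambda>j w. app (phi \<sigma> R \<epsilon> \<iota> \<pi> j) w) [1..<R+1] v"

end

theory Submission
  imports Defs
begin


definition Sset :: "nat \<Rightarrow> nat set set \<Rightarrow> nat \<Rightarrow> nat set" where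
  "Sset R \<pi> j = {q. j \<le> q \<and> q \<le> R \<and> (\<exists>a\<in>blk \<pi> q. a < j) \<and> (\<forall>q'\<in>blk \<pi> q. j \<le> q' \<longrightarrow> q \<le> q')}"

definition cnt :: "nat set set \<Rightarrow> nat \<Rightarrow> nat \<Rightarrow> nat" where
  "cnt \<pi> j q = card {q'\<in>blk \<pi> q. j \<le> q'}"

definition colr :: "epsilon \<Rightarrow> col" where
  "colr e = (if e = EOne then Cf else Ce)"

definition letr :: "nat set set \<Rightarrow> (nat \<Rightarrow> epsilon) \<Rightarrow> (nat \<Rightarrow> nat) \<Rightarrow> nat \<Rightarrow> nat \<Rightarrow> letter" where
  "letr \<pi> \<epsilon> \<iota> j q = (\<iota> q, colr (\<epsilon> q), \<lambda>t. idf t ^ cnt \<pi> j q)"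

definition mB :: "(nat \<Rightarrow> real measure) \<Rightarrow> (nat \<Rightarrow> nat) \<Rightarrow> nat set \<Rightarrow> complex" where
  "mB \<sigma> \<iota> B = complex_of_real (LINT t|\<sigma> (\<iota> (Min B)). t ^ card B)"

definition coef :: "(nat \<Rightarrow> real measure) \<Rightarrow> (nat \<Rightarrow> nat) \<Rightarrow> nat set set \<Rightarrow> nat \<Rightarrow> complex" where
  "coef \<sigma> \<iota> \<pi> j = (\<Prod>B\<in>{B\<in>\<pi>. j \<le> Min B}. mB \<sigma> \<iota> B)"

context
  fixes R :: nat and \<pi> :: "nat set set" and \<epsilon> :: "nat \<Rightarrow> epsilon" and \<iota> :: "nat \<Rightarrow> nat"
  assumes irr: "NC_irr R \<pi>"
  and blocks: "\<forall>B\<in>\<pi>. (\<forall>q\<in>B. \<iota> q = \<iota> (Min B)) \<and> cyc_alt (map \<epsilon> (sorted_list_of_set B))"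
begin

lemma part: "partition_on {1..R} \<pi>" using irr unfolding NC_irr_def NC_def by blast

lemma noncr: "B \<in> \<pi> \<Longrightarrow> B' \<in> \<pi> \<Longrightarrow> B \<noteq> B' \<Longrightarrow> a < b \<Longrightarrow> b < c \<Longrightarrow> c < d \<Longrightarrow>
   a \<in> B \<Longrightarrow> c \<in> B \<Longrightarrow> b \<in> B' \<Longrightarrow> d \<in> B' \<Longrightarrow> False"
  using irr unfolding NC_irr_def NC_def by blast

lemma fin_pi: "finite \<pi>"
  using part by (metis finite_UnionD finite_atLeastAtMost partition_onD1)

lemma blk_sub: "B \<in> \<pi> \<Longrightarrow> B \<subseteq> {1..R}"
  using part partition_onD1 by blast

lemma blk_fin: "B \<in> \<pi> \<Longrightarrow> finite B"
  using blk_sub finite_subset by blast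

lemma blk_ne: "B \<in> \<pi> \<Longrightarrow> B \<noteq> {}"
  using part partition_onD3 by blast

lemma blk_disj: "B \<in> \<pi> \<Longrightarrow> B' \<in> \<pi> \<Longrightarrow> q \<in> B \<Longrightarrow> q \<in> B' \<Longrightarrow> B = B'"
  using part partition_onD2 disjointD by blast

lemma blk_eq: "B \<in> \<pi> \<Longrightarrow> q \<in> B \<Longrightarrow> blk \<pi> q = B"
  unfolding blk_def using blk_disj by (intro the_equality) blast+

lemma blk_in: "q \<in> {1..R} \<Longrightarrow> blk \<pi> q \<in> \<pi> \<and> q \<in> blk \<pi> q"
proof -
  assume "q \<in> {1..R}"
  then obtain B where "B \<in> \<pi>" "q \<in> B" using part partition_onD1 by blast
  then show ?thesis using blk_eq by auto
qed

lemma iota_blk: "B \<in> \<pi> \<Longrightarrow> q \<in> B \<Longrightarrow> \<iota> q = \<iota> (Min B)"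
  using blocks by blast

lemma alt_facts:
  assumes B: "B \<in> \<pi>"
  shows "card B \<ge> 2" and "\<epsilon> (Min B) \<noteq> \<epsilon> (Max B)"
    and "\<And>p n. p \<in> B \<Longrightarrow> n \<in> B \<Longrightarrow> p < n \<Longrightarrow> (\<forall>x\<in>B. x \<le> p \<or> n \<le> x) \<Longrightarrow> \<epsilon> p \<noteq> \<epsilon> n"
proof -
  define xs where "xs = sorted_list_of_set B"
  have fin: "finite B" using B blk_fin by blast
  have ne: "B \<noteq> {}" using B blk_ne by blast
  have ca: "cyc_alt (map \<epsilon> xs)" using blocks B xs_def by blast
  have len: "length xs = card B" using xs_def by simp
  have setx: "set xs = B" using xs_def fin by simp
  have ss: "sorted_wrt (<) xs" using xs_def by (simp add: strict_sorted_list_of_set)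
  have cpos: "card B > 0" using fin ne by (simp add: card_gt_0_iff)
  have alt: "\<And>i. i < card B \<Longrightarrow> \<epsilon> (xs ! i) \<noteq> \<epsilon> (xs ! ((i+1) mod card B))"
  proof -
    fix i assume "i < card B"
    moreover have "(i+1) mod card B < card B" using cpos by simp
    ultimately show "\<epsilon> (xs ! i) \<noteq> \<epsilon> (xs ! ((i+1) mod card B))"
      using ca len unfolding cyc_alt_def by auto
  qed
  show c2: "card B \<ge> 2"
  proof (rule ccontr)
    assume "\<not> 2 \<le> card B"
    then have "card B = 1" using cpos by linarith
    then show False using alt[of 0] by simp
  qed
  have x0: "xs ! 0 = Min B"
    using sorted_list_of_set_nonempty[OF fin ne] xs_def by simp
  have xl: "xs ! (card B - 1) = Max B"
  proof -
    have "xs ! (card B - 1) \<in> B" using setx len cpos by (metis diff_less nth_mem zero_less_one)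
    moreover have "\<forall>x\<in>B. x \<le> xs ! (card B - 1)"
    proof
      fix x assume "x \<in> B"
      then obtain l where l: "l < card B" "xs ! l = x" using setx len by (metis in_set_conv_nth)
      show "x \<le> xs ! (card B - 1)"
      proof (cases "l = card B - 1")
        case False
        then have "l < card B - 1" using l by linarith
        then show ?thesis using ss l len by (metis diff_less less_imp_le sorted_wrt_nth_less zero_less_one cpos)
      qed (use l in simp)
    qed
    ultimately show ?thesis using fin by (metis Max_eqI)
  qed
  show "\<epsilon> (Min B) \<noteq> \<epsilon> (Max B)"
    using alt[of "card B - 1"] cpos x0 xl by (metis One_nat_def Suc_pred diff_less less_numeral_extra(1) mod_self add.commute plus_1_eq_Suc)
  fix p n assume p: "p \<in> B" and n: "n \<in> B" and pn: "p < n" and gap: "\<forall>x\<in>B. x \<le> p \<or> n \<le> x"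
  obtain i where i: "i < card B" "xs ! i = p" using setx len p by (metis in_set_conv_nth)
  obtain l where l: "l < card B" "xs ! l = n" using setx len n by (metis in_set_conv_nth)
  have "i < l"
  proof (rule ccontr)
    assume "\<not> i < l"
    then have "l \<le> i" by simp
    then have "xs ! l \<le> xs ! i" using ss i l len
      by (metis le_neq_implies_less less_imp_le order.refl sorted_wrt_nth_less)
    then show False using i l pn by simp
  qed
  have "l = i + 1"
  proof (rule ccontr)
    assume "l \<noteq> i + 1"
    then have "i + 1 < l" using \<open>i < l\<close> by simp
    then have "xs ! i < xs ! (i+1)" "xs ! (i+1) < xs ! l"
      using sorted_wrt_nth_less[OF ss, of i "i+1"] sorted_wrt_nth_less[OF ss, of "i+1" l] l len by auto
    moreover have "xs ! (i+1) \<in> B" using setx len l \<open>i+1 < l\<close> by (metis less_trans nth_mem)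
    ultimately show False using gap i l by fastforce
  qed
  then show "\<epsilon> p \<noteq> \<epsilon> n" using alt[of i] i l by simp
qed

definition Ob where "Ob = blk \<pi> 1"

lemma Obfacts: "Ob \<in> \<pi>" "1 \<in> Ob" "R \<in> Ob" "R \<ge> 2" "Min Ob = 1"
proof -
  obtain B where B: "B \<in> \<pi>" "1 \<in> B" "R \<in> B" using irr unfolding NC_irr_def by blast
  then show o: "Ob \<in> \<pi>" "1 \<in> Ob" "R \<in> Ob" using blk_eq Ob_def by auto
  show "R \<ge> 2"
  proof (rule ccontr)
    assume "\<not> R \<ge> 2"
    then have "Ob \<subseteq> {1}" using blk_sub[OF o(1)] by auto
    then have "card Ob \<le> 1" using card_mono[of "{1}" Ob] by simp
    then show False using alt_facts(1)[OF o(1)] by simp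
  qed
  show "Min Ob = 1" using o blk_sub[OF o(1)] blk_fin[OF o(1)] by (intro Min_eqI) auto
qed

lemma S_bounds: "q \<in> Sset R \<pi> j \<Longrightarrow> j \<le> q \<and> q \<le> R"
  unfolding Sset_def by auto

lemma S_fin: "finite (Sset R \<pi> j)"
  by (rule finite_subset[of _ "{..R}"]) (auto simp: Sset_def)

definition nx where "nx p = Min {q\<in>blk \<pi> p. p < q}"

lemma nx_facts:
  assumes p: "p \<in> {1..R}" and pm: "p \<noteq> Max (blk \<pi> p)"
  shows "nx p \<in> blk \<pi> p" "p < nx p" "\<forall>x\<in>blk \<pi> p. x \<le> p \<or> nx p \<le> x"
proof -
  let ?C = "blk \<pi> p"
  have C: "?C \<in> \<pi>" "p \<in> ?C" using blk_in p by auto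
  have fin: "finite {q\<in>?C. p < q}" using blk_fin[OF C(1)] by simp
  have "Max ?C \<in> ?C" "p \<le> Max ?C" using C Max_in[OF blk_fin[OF C(1)]] Max_ge[OF blk_fin[OF C(1)]] by auto
  then have ne: "{q\<in>?C. p < q} \<noteq> {}" using pm by force
  show "nx p \<in> ?C" "p < nx p" using Min_in[OF fin ne] unfolding nx_def by auto
  show "\<forall>x\<in>?C. x \<le> p \<or> nx p \<le> x"
  proof
    fix x assume x: "x \<in> ?C"
    show "x \<le> p \<or> nx p \<le> x"
    proof (cases "p < x")
      case True then show ?thesis using Min_le[OF fin] x unfolding nx_def by auto
    qed auto
  qed
qed

lemma S_min:
  assumes p: "p \<in> {1..R}" and pm: "p \<noteq> Max (blk \<pi> p)"
  shows "nx p \<in> Sset R \<pi> (Suc p)" "\<And>q. q \<in> Sset R \<pi> (Suc p) \<Longrightarrow> q \<noteq> nx p \<Longrightarrow> nx p < q \<and> blk \<pi> q \<noteq> blk \<pi> p"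
proof -
  let ?C = "blk \<pi> p"
  have C: "?C \<in> \<pi>" "p \<in> ?C" using blk_in p by auto
  note nf = nx_facts[OF p pm]
  have bn: "blk \<pi> (nx p) = ?C" using blk_eq C nf by blast
  have "nx p \<le> R" using blk_sub[OF C(1)] nf by auto
  then show "nx p \<in> Sset R \<pi> (Suc p)" unfolding Sset_def using bn nf C by force
  fix q assume q: "q \<in> Sset R \<pi> (Suc p)" and qn: "q \<noteq> nx p"
  have qR: "q \<in> {1..R}" using q unfolding Sset_def by auto
  have B: "blk \<pi> q \<in> \<pi>" "q \<in> blk \<pi> q" using blk_in[OF qR] by auto
  have BC: "blk \<pi> q \<noteq> ?C"
  proof
    assume e: "blk \<pi> q = ?C"
    have "nx p \<le> q" using nf(3) q B(2) e unfolding Sset_def by force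
    moreover have "q \<le> nx p" using q e nf unfolding Sset_def by auto
    ultimately show False using qn by simp
  qed
  obtain a where a: "a \<in> blk \<pi> q" "a < Suc p" using q unfolding Sset_def by auto
  have "a \<noteq> p" using BC blk_eq[OF B(1) a(1)] blk_eq[OF C] by (metis C(2) a(1) blk_disj B(1) C(1))
  then have ap: "a < p" using a by simp
  have "\<not> q < nx p"
  proof
    assume "q < nx p"
    moreover have "p < q" using q unfolding Sset_def by auto
    ultimately show False using noncr[OF B(1) C(1) BC ap _ _ a(1) B(2) C(2) nf(1)] by blast
  qed
  then show "nx p < q \<and> blk \<pi> q \<noteq> blk \<pi> p" using qn BC by simp
qed

lemma S_trans_other:
  assumes p: "p \<in> {1..R}" and q: "q > p" "q \<le> R" and BC: "blk \<pi> q \<noteq> blk \<pi> p"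
  shows "q \<in> Sset R \<pi> p \<longleftrightarrow> q \<in> Sset R \<pi> (Suc p)" and "cnt \<pi> p q = cnt \<pi> (Suc p) q"
proof -
  have qR: "q \<in> {1..R}" using p q by auto
  have pn: "p \<notin> blk \<pi> q"
  proof
    assume "p \<in> blk \<pi> q"
    then have "blk \<pi> p = blk \<pi> q" using blk_eq blk_in[OF qR] by blast
    then show False using BC by simp
  qed
  have h1: "\<And>a. a \<in> blk \<pi> q \<Longrightarrow> (a < p \<longleftrightarrow> a < Suc p)" using pn by (metis less_Suc_eq)
  have h2: "\<And>a. a \<in> blk \<pi> q \<Longrightarrow> (p \<le> a \<longleftrightarrow> Suc p \<le> a)" using pn by (metis Suc_le_eq le_eq_less_or_eq)
  have e1: "(\<exists>a\<in>blk \<pi> q. a < p) = (\<exists>a\<in>blk \<pi> q. a < Suc p)" using h1 by blast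
  have e2: "(\<forall>q'\<in>blk \<pi> q. p \<le> q' \<longrightarrow> q \<le> q') = (\<forall>q'\<in>blk \<pi> q. Suc p \<le> q' \<longrightarrow> q \<le> q')" using h2 by blast
  show "q \<in> Sset R \<pi> p \<longleftrightarrow> q \<in> Sset R \<pi> (Suc p)"
    by (simp only: Sset_def mem_Collect_eq e1 e2) (use q in auto)
  have "{q'\<in>blk \<pi> q. p \<le> q'} = {q'\<in>blk \<pi> q. Suc p \<le> q'}" using pn by (auto simp: le_eq_less_or_eq)
  then show "cnt \<pi> p q = cnt \<pi> (Suc p) q" unfolding cnt_def by simp
qed

lemma S_mid:
  assumes p: "p \<in> {1..R}" and pm: "p \<noteq> Max (blk \<pi> p)" and pmin: "p \<noteq> Min (blk \<pi> p)"
  shows "Sset R \<pi> p = insert p (Sset R \<pi> (Suc p) - {nx p})"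
proof -
  let ?C = "blk \<pi> p"
  have C: "?C \<in> \<pi>" "p \<in> ?C" using blk_in p by auto
  have "Min ?C \<le> p" "Min ?C \<in> ?C" using C Min_in[OF blk_fin[OF C(1)]] Min_le[OF blk_fin[OF C(1)]] by auto
  then have ex: "\<exists>a\<in>?C. a < p" using pmin by (metis le_neq_implies_less)
  have pin: "p \<in> Sset R \<pi> p" using ex p unfolding Sset_def by auto
  show ?thesis
  proof (rule set_eqI, rule iffI)
    fix q assume q: "q \<in> Sset R \<pi> p"
    show "q \<in> insert p (Sset R \<pi> (Suc p) - {nx p})"
    proof (cases "q = p")
      case False
      then have qp: "q > p" "q \<le> R" using q S_bounds by (auto simp: le_eq_less_or_eq)
      have BC: "blk \<pi> q \<noteq> ?C"
      proof
        assume e: "blk \<pi> q = ?C"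
        then show False using q qp C unfolding Sset_def by force
      qed
      then have "q \<noteq> nx p" using blk_eq nx_facts[OF p pm] C by metis
      then show ?thesis using S_trans_other[OF p qp BC] q by auto
    qed simp
  next
    fix q assume q: "q \<in> insert p (Sset R \<pi> (Suc p) - {nx p})"
    show "q \<in> Sset R \<pi> p"
    proof (cases "q = p")
      case False
      then have q1: "q \<in> Sset R \<pi> (Suc p)" "q \<noteq> nx p" using q by auto
      then have qp: "q > p" "q \<le> R" using S_bounds by fastforce+
      have BC: "blk \<pi> q \<noteq> ?C" using S_min(2)[OF p pm q1] by simp
      then show ?thesis using S_trans_other[OF p qp BC] q1 by auto
    qed (use pin in simp)
  qed
qed

lemma S_pop:
  assumes p: "p \<in> {1..R}" and pm: "p \<noteq> Max (blk \<pi> p)" and pmin: "p = Min (blk \<pi> p)"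
  shows "Sset R \<pi> p = Sset R \<pi> (Suc p) - {nx p}"
proof -
  let ?C = "blk \<pi> p"
  have C: "?C \<in> \<pi>" "p \<in> ?C" using blk_in p by auto
  have nol: "\<forall>a\<in>?C. p \<le> a" using pmin Min_le[OF blk_fin[OF C(1)]] by metis
  show ?thesis
  proof (rule set_eqI, rule iffI)
    fix q assume q: "q \<in> Sset R \<pi> p"
    have "q \<noteq> p" using q nol unfolding Sset_def by force
    then have qp: "q > p" "q \<le> R" using q S_bounds by (auto simp: le_eq_less_or_eq)
    have BC: "blk \<pi> q \<noteq> ?C"
    proof
      assume e: "blk \<pi> q = ?C"
      then show False using q qp C unfolding Sset_def by force
    qed
    then have "q \<noteq> nx p" using blk_eq nx_facts[OF p pm] C by metis
    then show "q \<in> Sset R \<pi> (Suc p) - {nx p}" using S_trans_other[OF p qp BC] q by auto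
  next
    fix q assume q: "q \<in> Sset R \<pi> (Suc p) - {nx p}"
    then have q1: "q \<in> Sset R \<pi> (Suc p)" "q \<noteq> nx p" by auto
    then have qp: "q > p" "q \<le> R" using S_bounds by fastforce+
    have BC: "blk \<pi> q \<noteq> ?C" using S_min(2)[OF p pm q1] by simp
    then show "q \<in> Sset R \<pi> p" using S_trans_other[OF p qp BC] q1 by auto
  qed
qed

lemma S_push:
  assumes p: "p \<in> {1..R}" and pm: "p = Max (blk \<pi> p)" and pmin: "p \<noteq> Min (blk \<pi> p)"
  shows "Sset R \<pi> p = insert p (Sset R \<pi> (Suc p))"
proof -
  let ?C = "blk \<pi> p"
  have C: "?C \<in> \<pi>" "p \<in> ?C" using blk_in p by auto
  have "Min ?C \<le> p" "Min ?C \<in> ?C" using C Min_in[OF blk_fin[OF C(1)]] Min_le[OF blk_fin[OF C(1)]] by auto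
  then have ex: "\<exists>a\<in>?C. a < p" using pmin by (metis le_neq_implies_less)
  have pin: "p \<in> Sset R \<pi> p" using ex p unfolding Sset_def by auto
  have nog: "\<forall>a\<in>?C. a \<le> p" using pm Max_ge[OF blk_fin[OF C(1)]] by metis
  have oth: "\<And>q. q > p \<Longrightarrow> q \<le> R \<Longrightarrow> blk \<pi> q \<noteq> ?C"
    using nog blk_in by (metis atLeastAtMost_iff less_imp_le_nat not_less order_trans p)
  show ?thesis
  proof (rule set_eqI, rule iffI)
    fix q assume q: "q \<in> Sset R \<pi> p"
    show "q \<in> insert p (Sset R \<pi> (Suc p))"
    proof (cases "q = p")
      case False
      then have qp: "q > p" "q \<le> R" using q S_bounds by (auto simp: le_eq_less_or_eq)
      then show ?thesis using S_trans_other[OF p qp oth[OF qp]] q by auto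
    qed simp
  next
    fix q assume q: "q \<in> insert p (Sset R \<pi> (Suc p))"
    show "q \<in> Sset R \<pi> p"
    proof (cases "q = p")
      case False
      then have q1: "q \<in> Sset R \<pi> (Suc p)" using q by auto
      then have qp: "q > p" "q \<le> R" using S_bounds by fastforce+
      then show ?thesis using S_trans_other[OF p qp oth[OF qp]] q1 by auto
    qed (use pin in simp)
  qed
qed

end


lemma app_single: "app T [(c, u)] = map (\<lambda>(b, u'). (c * b, u')) (T u)"
  unfolding app_def by simp

definition Wd :: "nat \<Rightarrow> nat set set \<Rightarrow> (nat \<Rightarrow> epsilon) \<Rightarrow> (nat \<Rightarrow> nat) \<Rightarrow> nat \<Rightarrow> word" where
  "Wd R \<pi> \<epsilon> \<iota> j = map (letr \<pi> \<epsilon> \<iota> j) (sorted_list_of_set (Sset R \<pi> j))"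

lemma integ_pow: "(LINT t|M. idf t ^ n * cnj (idf t)) = complex_of_real (LINT t|M. t ^ Suc n)"
proof -
  have "(\<lambda>t. idf t ^ n * cnj (idf t)) = (\<lambda>t. complex_of_real (t ^ Suc n))"
    by (rule ext) (simp add: idf_def mult.commute)
  then show ?thesis by (subst \<open>_ = _\<close>) (rule integral_complex_of_real)
qed

lemma integ_pow1: "(LINT t|M. idf t ^ n * cnj 1) = complex_of_real (LINT t|M. t ^ n)"
proof -
  have "(\<lambda>t. idf t ^ n * cnj 1) = (\<lambda>t. complex_of_real (t ^ n))"
    by (rule ext) (simp add: idf_def)
  then show ?thesis by (subst \<open>_ = _\<close>) (rule integral_complex_of_real)
qed

context
  fixes R :: nat and \<pi> :: "nat set set" and \<epsilon> :: "nat \<Rightarrow> epsilon" and \<iota> :: "nat \<Rightarrow> nat"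
  assumes irr: "NC_irr R \<pi>"
  and blocks: "\<forall>B\<in>\<pi>. (\<forall>q\<in>B. \<iota> q = \<iota> (Min B)) \<and> cyc_alt (map \<epsilon> (sorted_list_of_set B))"
begin

lemmas Sfin = S_fin[OF irr blocks] and Sb = S_bounds[OF irr blocks]
lemmas F = blk_in[OF irr blocks] blk_eq[OF irr blocks] blk_fin[OF irr blocks] blk_sub[OF irr blocks]
  iota_blk[OF irr blocks] alt_facts[OF irr blocks] Obfacts[OF irr blocks] Sb Sfin
  nx_facts[OF irr blocks] S_min[OF irr blocks] S_trans_other[OF irr blocks]
  S_mid[OF irr blocks] S_pop[OF irr blocks] S_push[OF irr blocks]

lemma letr_same:
  assumes p: "p \<in> {1..R}" and q: "q \<in> Sset R \<pi> (Suc p)" and BC: "blk \<pi> q \<noteq> blk \<pi> p"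
  shows "letr \<pi> \<epsilon> \<iota> p q = letr \<pi> \<epsilon> \<iota> (Suc p) q"
proof -
  have "q > p" "q \<le> R" using Sb[OF q] by auto
  then show ?thesis using S_trans_other(2)[OF irr blocks p _ _ BC] unfolding letr_def by simp
qed

lemma cnt_suc:
  assumes p: "p \<in> {1..R}" and pm: "p \<noteq> Max (blk \<pi> p)"
  shows "cnt \<pi> p p = Suc (cnt \<pi> (Suc p) (nx \<pi> p))"
proof -
  let ?C = "blk \<pi> p"
  have C: "?C \<in> \<pi>" "p \<in> ?C" using F(1) p by auto
  have bn: "blk \<pi> (nx \<pi> p) = ?C" using F(2)[OF C(1)] nx_facts[OF irr blocks p pm] by blast
  have "{q'\<in>?C. p \<le> q'} = insert p {q'\<in>?C. Suc p \<le> q'}" using C by auto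
  moreover have "finite {q'\<in>?C. Suc p \<le> q'}" using F(3)[OF C(1)] by simp
  ultimately show ?thesis unfolding cnt_def bn by simp
qed

lemma cnt_min:
  assumes p: "p \<in> {1..R}" and pm: "p = Min (blk \<pi> p)"
  shows "cnt \<pi> p p = card (blk \<pi> p)"
proof -
  let ?C = "blk \<pi> p"
  have C: "?C \<in> \<pi>" "p \<in> ?C" using F(1) p by auto
  have "{q'\<in>?C. p \<le> q'} = ?C" using pm Min_le[OF F(3)[OF C(1)]] by auto
  then show ?thesis unfolding cnt_def by simp
qed

lemma cnt_max:
  assumes p: "p \<in> {1..R}" and pm: "p = Max (blk \<pi> p)"
  shows "cnt \<pi> p p = 1"
proof -
  let ?C = "blk \<pi> p"
  have C: "?C \<in> \<pi>" "p \<in> ?C" using F(1) p by auto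
  have "{q'\<in>?C. p \<le> q'} = {p}" using pm Max_ge[OF F(3)[OF C(1)]] C by (auto intro: antisym)
  then show ?thesis unfolding cnt_def by simp
qed

lemma coef_same:
  assumes p: "p \<in> {1..R}" and pm: "p \<noteq> Min (blk \<pi> p)"
  shows "coef \<sigma> \<iota> \<pi> p = coef \<sigma> \<iota> \<pi> (Suc p)"
proof -
  have "{B\<in>\<pi>. p \<le> Min B} = {B\<in>\<pi>. Suc p \<le> Min B}"
  proof (rule set_eqI, rule iffI)
    fix B assume B: "B \<in> {B\<in>\<pi>. p \<le> Min B}"
    show "B \<in> {B\<in>\<pi>. Suc p \<le> Min B}"
    proof (rule ccontr)
      assume "B \<notin> {B\<in>\<pi>. Suc p \<le> Min B}"
      then have "Min B = p" using B by auto
      moreover have "Min B \<in> B" using B Min_in[OF F(3)] blk_ne[OF irr blocks] by blast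
      ultimately show False using F(2) B pm by force
    qed
  qed auto
  then show ?thesis unfolding coef_def by simp
qed

lemma coef_pop:
  assumes p: "p \<in> {1..R}" and pm: "p = Min (blk \<pi> p)"
  shows "coef \<sigma> \<iota> \<pi> p = mB \<sigma> \<iota> (blk \<pi> p) * coef \<sigma> \<iota> \<pi> (Suc p)"
proof -
  have C: "blk \<pi> p \<in> \<pi>" using F(1) p by auto
  have "{B\<in>\<pi>. p \<le> Min B} = insert (blk \<pi> p) {B\<in>\<pi>. Suc p \<le> Min B}"
  proof (rule set_eqI, rule iffI)
    fix B assume B: "B \<in> {B\<in>\<pi>. p \<le> Min B}"
    show "B \<in> insert (blk \<pi> p) {B\<in>\<pi>. Suc p \<le> Min B}"
    proof (cases "Min B = p")
      case True
      moreover have "Min B \<in> B" using B Min_in[OF F(3)] blk_ne[OF irr blocks] by blast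
      ultimately show ?thesis using F(2) B by force
    qed (use B in auto)
  qed (use C pm in auto)
  moreover have "blk \<pi> p \<notin> {B\<in>\<pi>. Suc p \<le> Min B}" using pm by simp
  moreover have "finite {B\<in>\<pi>. Suc p \<le> Min B}" using fin_pi[OF irr blocks] by simp
  ultimately show ?thesis unfolding coef_def by simp
qed

lemma Smin_eq:
  assumes p: "p \<in> {1..R}" and pm: "p \<noteq> Max (blk \<pi> p)"
  shows "sorted_list_of_set (Sset R \<pi> (Suc p)) = nx \<pi> p # sorted_list_of_set (Sset R \<pi> (Suc p) - {nx \<pi> p})"
proof -
  have m: "Min (Sset R \<pi> (Suc p)) = nx \<pi> p"
  proof (rule Min_eqI[OF Sfin])
    fix y assume "y \<in> Sset R \<pi> (Suc p)"
    then show "nx \<pi> p \<le> y" using S_min(2)[OF irr blocks p pm] by (metis less_imp_le order_refl)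
  qed (use S_min(1)[OF irr blocks p pm] in simp)
  have "Sset R \<pi> (Suc p) \<noteq> {}" using S_min(1)[OF irr blocks p pm] by auto
  then show ?thesis using sorted_list_of_set_nonempty[OF Sfin] m by simp
qed

lemma Sp_sorted:
  assumes "Sset R \<pi> p = insert p T" and "T \<subseteq> Sset R \<pi> (Suc p)"
  shows "sorted_list_of_set (Sset R \<pi> p) = p # sorted_list_of_set T"
proof -
  have fT: "finite T" using assms(2) Sfin finite_subset by blast
  have gt: "\<forall>y\<in>T. p < y" using assms(2) Sb by fastforce
  have m: "Min (Sset R \<pi> p) = p" unfolding assms(1) using gt fT
    by (intro Min_eqI) (auto simp: less_imp_le)
  have pT: "p \<notin> T" using assms(2) Sb by fastforce
  show ?thesis using sorted_list_of_set_nonempty[OF Sfin, of p] m assms(1) pT by simp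
qed

lemma S_outer:
  assumes j: "2 \<le> j" "j \<le> R"
  shows "\<exists>q\<in>Sset R \<pi> j. blk \<pi> q = Ob \<pi>"
proof -
  note O = Obfacts[OF irr blocks]
  have fin: "finite {q\<in>Ob \<pi>. j \<le> q}" using F(3)[OF O(1)] by simp
  have ne: "{q\<in>Ob \<pi>. j \<le> q} \<noteq> {}" using O j by auto
  define m where "m = Min {q\<in>Ob \<pi>. j \<le> q}"
  have m: "m \<in> Ob \<pi>" "j \<le> m" using Min_in[OF fin ne] m_def by auto
  have bm: "blk \<pi> m = Ob \<pi>" using F(2)[OF O(1) m(1)] .
  have "m \<le> R" using F(4)[OF O(1)] m by auto
  moreover have "\<forall>q'\<in>Ob \<pi>. j \<le> q' \<longrightarrow> m \<le> q'" using Min_le[OF fin] m_def by auto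
  moreover have "\<exists>a\<in>Ob \<pi>. a < j" using O(2) j by (intro bexI[of _ 1]) auto
  ultimately have "m \<in> Sset R \<pi> j" using m bm unfolding Sset_def by auto
  then show ?thesis using bm by blast
qed

lemma step:
  assumes p2: "2 \<le> p" and pR: "p < R"
  shows "app (phi \<sigma> R \<epsilon> \<iota> \<pi> p) [(coef \<sigma> \<iota> \<pi> (Suc p), Wd R \<pi> \<epsilon> \<iota> (Suc p))] = [(coef \<sigma> \<iota> \<pi> p, Wd R \<pi> \<epsilon> \<iota> p)]"
proof -
  let ?C = "blk \<pi> p"
  have p: "p \<in> {1..R}" using p2 pR by auto
  have C: "?C \<in> \<pi>" "p \<in> ?C" using F(1) p by auto
  have mm: "\<epsilon> (Min ?C) \<noteq> \<epsilon> (Max ?C)" using alt_facts(2)[OF irr blocks C(1)] by auto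
  have phi_eq: "phi \<sigma> R \<epsilon> \<iota> \<pi> p = (if \<epsilon> p = EOne then (if p = Min ?C then opD \<sigma> (\<iota> p) else if p = Max ?C then opAstar (\<iota> p) else opM (\<iota> p)) else (if p = Min ?C then opA \<sigma> (\<iota> p) else if p = Max ?C then opDstar (\<iota> p) else opMstar (\<iota> p)))"
  proof -
    have "p \<noteq> 1" "p \<noteq> R" using p2 pR by auto
    then show ?thesis unfolding phi_def by (simp only: if_False simp_thms)
  qed
  show ?thesis
  proof (cases "p = Max ?C")
    case True
    then have pmin: "p \<noteq> Min ?C" using mm by auto
    have S: "Sset R \<pi> p = insert p (Sset R \<pi> (Suc p))" using S_push[OF irr blocks p True pmin] .
    have sl: "sorted_list_of_set (Sset R \<pi> p) = p # sorted_list_of_set (Sset R \<pi> (Suc p))"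
      using Sp_sorted[OF S] by simp
    have tail: "map (letr \<pi> \<epsilon> \<iota> p) (sorted_list_of_set (Sset R \<pi> (Suc p))) = map (letr \<pi> \<epsilon> \<iota> (Suc p)) (sorted_list_of_set (Sset R \<pi> (Suc p)))"
    proof (rule map_cong[OF refl])
      fix q assume "q \<in> set (sorted_list_of_set (Sset R \<pi> (Suc p)))"
      then have q: "q \<in> Sset R \<pi> (Suc p)" using Sfin by simp
      have "blk \<pi> q \<noteq> ?C"
      proof
        assume e: "blk \<pi> q = ?C"
        have "q \<in> {1..R}" using Sb[OF q] by auto
        then have "q \<in> ?C" using F(1) e by metis
        then have "q \<le> p" using True Max_ge[OF F(3)[OF C(1)]] by metis
        then show False using Sb[OF q] by simp
      qed
      then show "letr \<pi> \<epsilon> \<iota> p q = letr \<pi> \<epsilon> \<iota> (Suc p) q" using letr_same[OF p q] by simp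
    qed
    have hd: "letr \<pi> \<epsilon> \<iota> p p = (\<iota> p, colr (\<epsilon> p), idf)"
      unfolding letr_def cnt_max[OF p True] by simp
    have W: "Wd R \<pi> \<epsilon> \<iota> p = (\<iota> p, colr (\<epsilon> p), idf) # Wd R \<pi> \<epsilon> \<iota> (Suc p)"
      unfolding Wd_def sl using tail hd by simp
    have c: "coef \<sigma> \<iota> \<pi> p = coef \<sigma> \<iota> \<pi> (Suc p)" using coef_same[OF p pmin] .
    have t1: "(p = Max ?C) = True" "(p = Min ?C) = False" using True pmin by simp_all
    have ph: "phi \<sigma> R \<epsilon> \<iota> \<pi> p = (if \<epsilon> p = EOne then opAstar (\<iota> p) else opDstar (\<iota> p))"
      by (simp only: phi_eq t1 if_True if_False)
    show ?thesis
      by (cases "\<epsilon> p") (simp_all add: ph app_single opAstar_def opDstar_def colr_def W c)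
  next
    case False
    note pm = False
    define n where "n = nx \<pi> p"
    note nf = nx_facts[OF irr blocks p pm, folded n_def]
    have en: "\<epsilon> p \<noteq> \<epsilon> n" using alt_facts(3)[OF irr blocks C(1) C(2) nf(1) nf(2) nf(3)] .
    have io: "\<iota> n = \<iota> p" using F(5)[OF C(1) nf(1)] F(5)[OF C(1) C(2)] by simp
    have sl1: "sorted_list_of_set (Sset R \<pi> (Suc p)) = n # sorted_list_of_set (Sset R \<pi> (Suc p) - {n})"
      using Smin_eq[OF p pm] n_def by simp
    have tail: "map (letr \<pi> \<epsilon> \<iota> p) (sorted_list_of_set (Sset R \<pi> (Suc p) - {n})) = map (letr \<pi> \<epsilon> \<iota> (Suc p)) (sorted_list_of_set (Sset R \<pi> (Suc p) - {n}))"
    proof (rule map_cong[OF refl])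
      fix q assume "q \<in> set (sorted_list_of_set (Sset R \<pi> (Suc p) - {n}))"
      then have q: "q \<in> Sset R \<pi> (Suc p)" "q \<noteq> n" using Sfin by auto
      have "blk \<pi> q \<noteq> ?C" using S_min(2)[OF irr blocks p pm, folded n_def, OF q] by simp
      then show "letr \<pi> \<epsilon> \<iota> p q = letr \<pi> \<epsilon> \<iota> (Suc p) q" using letr_same[OF p q(1)] by simp
    qed
    define rest where "rest = map (letr \<pi> \<epsilon> \<iota> (Suc p)) (sorted_list_of_set (Sset R \<pi> (Suc p) - {n}))"
    define m where "m = cnt \<pi> (Suc p) n"
    have W1: "Wd R \<pi> \<epsilon> \<iota> (Suc p) = (\<iota> p, colr (\<epsilon> n), \<lambda>t. idf t ^ m) # rest"
      unfolding Wd_def sl1 rest_def m_def by (simp add: letr_def io)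
    have cs: "cnt \<pi> p p = Suc m" using cnt_suc[OF p pm] n_def m_def by simp
    show ?thesis
    proof (cases "p = Min ?C")
      case True
      have S: "Sset R \<pi> p = Sset R \<pi> (Suc p) - {n}" using S_pop[OF irr blocks p pm True] n_def by simp
      have W0: "Wd R \<pi> \<epsilon> \<iota> p = rest" unfolding Wd_def S tail rest_def ..
      obtain q where q: "q \<in> Sset R \<pi> (Suc p)" "blk \<pi> q = Ob \<pi>" using S_outer[of "Suc p"] p2 pR by auto
      have "Min (Ob \<pi>) \<noteq> Min ?C" using Obfacts[OF irr blocks] True p2 by simp
      then have "q \<noteq> n" using q(2) F(2)[OF C(1) nf(1)] by auto
      then have "Sset R \<pi> (Suc p) - {n} \<noteq> {}" using q by auto
      then have rne: "rest \<noteq> []" unfolding rest_def using Sfin by simp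
      have card: "card ?C = Suc m" using cnt_min[OF p True] cs by simp
      have mBC: "mB \<sigma> \<iota> ?C = complex_of_real (LINT t|\<sigma> (\<iota> p). t ^ Suc m)"
        unfolding mB_def card using True by simp
      have c: "coef \<sigma> \<iota> \<pi> p = (LINT t|\<sigma> (\<iota> p). idf t ^ m * cnj (idf t)) * coef \<sigma> \<iota> \<pi> (Suc p)"
        using coef_pop[OF p True] mBC integ_pow by simp
      have t1: "(p = Min ?C) = True" using True by simp_all
      have ph: "phi \<sigma> R \<epsilon> \<iota> \<pi> p = (if \<epsilon> p = EOne then opD \<sigma> (\<iota> p) else opA \<sigma> (\<iota> p))"
        by (simp only: phi_eq t1 if_True if_False)
      show ?thesis
        using en by (cases "\<epsilon> p"; cases "\<epsilon> n")
          (simp_all add: ph app_single W1 W0 rne colr_def linner_def c mult.commute)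
    next
      case False
      note pmin = False
      have S: "Sset R \<pi> p = insert p (Sset R \<pi> (Suc p) - {n})" using S_mid[OF irr blocks p pm pmin] n_def by simp
      have sl: "sorted_list_of_set (Sset R \<pi> p) = p # sorted_list_of_set (Sset R \<pi> (Suc p) - {n})"
        using Sp_sorted[OF S] by auto
      have W0: "Wd R \<pi> \<epsilon> \<iota> p = (\<iota> p, colr (\<epsilon> p), \<lambda>t. idf t ^ Suc m) # rest"
        unfolding Wd_def sl using tail rest_def cs by (simp add: letr_def)
      have c: "coef \<sigma> \<iota> \<pi> p = coef \<sigma> \<iota> \<pi> (Suc p)" using coef_same[OF p pmin] .
      have t1: "(p = Min ?C) = False" "(p = Max ?C) = False" using pm pmin by simp_all
      have ph: "phi \<sigma> R \<epsilon> \<iota> \<pi> p = (if \<epsilon> p = EOne then opM (\<iota> p) else opMstar (\<iota> p))"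
        by (simp only: phi_eq t1 if_True if_False)
      show ?thesis
        using en by (cases "\<epsilon> p"; cases "\<epsilon> n")
          (simp_all add: ph app_single W1 W0 colr_def c)
    qed
  qed
qed

lemma init:
  "app (phi \<sigma> R \<epsilon> \<iota> \<pi> R) (eta (\<iota> R)) = [(coef \<sigma> \<iota> \<pi> R, Wd R \<pi> \<epsilon> \<iota> R)]"
proof -
  note O = Obfacts[OF irr blocks]
  have R: "R \<in> {1..R}" using O by auto
  have bR: "blk \<pi> R = Ob \<pi>" using F(2)[OF O(1) O(3)] .
  have mx: "Max (Ob \<pi>) = R" using O F(4)[OF O(1)] F(3)[OF O(1)] by (intro Max_eqI) auto
  have S: "Sset R \<pi> R = {R}"
  proof (rule set_eqI, rule iffI)
    fix q assume "q \<in> Sset R \<pi> R" then show "q \<in> {R}" using Sb by fastforce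
  next
    fix q assume "q \<in> {R}"
    moreover have "\<exists>a\<in>blk \<pi> R. a < R" using bR O by (intro bexI[of _ 1]) auto
    ultimately show "q \<in> Sset R \<pi> R" unfolding Sset_def by auto
  qed
  have W: "Wd R \<pi> \<epsilon> \<iota> R = [(\<iota> R, colr (\<epsilon> R), \<lambda>t. idf t ^ 1)]"
    unfolding Wd_def S letr_def using cnt_max[OF R] bR mx by simp
  have c: "coef \<sigma> \<iota> \<pi> R = 1"
  proof -
    have e: "{B\<in>\<pi>. R \<le> Min B} = {}"
    proof (rule ccontr)
      assume "{B\<in>\<pi>. R \<le> Min B} \<noteq> {}"
      then obtain B where B: "B \<in> \<pi>" "R \<le> Min B" by auto
      have "Min B \<in> B" using B Min_in[OF F(3)] blk_ne[OF irr blocks] by blast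
      then have "Min B = R" "R \<in> B" using B F(4)[OF B(1)] by auto
      then have "B = Ob \<pi>" using F(2)[OF B(1)] bR by metis
      then show False using O \<open>Min B = R\<close> by simp
    qed
    then show ?thesis unfolding coef_def e by simp
  qed
  have ph: "phi \<sigma> R \<epsilon> \<iota> \<pi> R = (if \<epsilon> R = EOne then opM (\<iota> R) else opMstar (\<iota> R))"
    unfolding phi_def by simp
  show ?thesis
    by (cases "\<epsilon> R") (simp_all add: ph W c eta_def app_def colr_def)
qed

lemma final:
  "finner \<sigma> (app (phi \<sigma> R \<epsilon> \<iota> \<pi> 1) [(coef \<sigma> \<iota> \<pi> 2, Wd R \<pi> \<epsilon> \<iota> 2)]) (eta (\<iota> 1)) = (\<Prod>B\<in>\<pi>. mB \<sigma> \<iota> B)"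
proof -
  note O = Obfacts[OF irr blocks]
  have p: "(1::nat) \<in> {1..R}" using O by auto
  have b1: "blk \<pi> 1 = Ob \<pi>" using F(2)[OF O(1) O(2)] .
  have mx: "Max (Ob \<pi>) = R" using O F(4)[OF O(1)] F(3)[OF O(1)] by (intro Max_eqI) auto
  have pm: "1 \<noteq> Max (blk \<pi> 1)" using b1 mx O by simp
  define n where "n = nx \<pi> 1"
  note nf = nx_facts[OF irr blocks p pm, folded n_def]
  have C1: "blk \<pi> 1 \<in> \<pi>" "1 \<in> blk \<pi> 1" using F(1)[OF p] by auto
  have en: "\<epsilon> 1 \<noteq> \<epsilon> n" using alt_facts(3)[OF irr blocks C1(1) C1(2) nf(1) nf(2) nf(3)] .
  have io: "\<iota> n = \<iota> 1" using F(5)[OF C1(1) nf(1)] F(5)[OF C1(1) C1(2)] by simp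
  have S: "Sset R \<pi> 2 = {n}"
  proof (rule set_eqI, rule iffI)
    fix q assume q: "q \<in> Sset R \<pi> 2"
    show "q \<in> {n}"
    proof (rule ccontr)
      assume "q \<notin> {n}"
      then have qn: "q \<noteq> n" by simp
      have q1: "q \<in> Sset R \<pi> (Suc 1)" using q by (metis Suc_1)
      have "blk \<pi> q \<noteq> blk \<pi> 1" using S_min(2)[OF irr blocks p pm, folded n_def, OF q1 qn] by simp
      moreover obtain a where a: "a \<in> blk \<pi> q" "a < 2" using q unfolding Sset_def by auto
      moreover have "q \<in> {1..R}" using Sb[OF q] by auto
      then have bq: "blk \<pi> q \<in> \<pi>" using F(1) by blast
      have "a \<ge> 1" using F(4)[OF bq] a(1) by auto
      then have "a = 1" using a(2) by simp
      then have "blk \<pi> 1 = blk \<pi> q" using F(2)[OF bq] a(1) by simp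
      ultimately show False by simp
    qed
  next
    fix q assume "q \<in> {n}"
    then show "q \<in> Sset R \<pi> 2" using S_min(1)[OF irr blocks p pm, folded n_def] by (metis Suc_1 singletonD)
  qed
  define m where "m = cnt \<pi> 2 n"
  have W: "Wd R \<pi> \<epsilon> \<iota> 2 = [(\<iota> 1, colr (\<epsilon> n), \<lambda>t. idf t ^ m)]"
    unfolding Wd_def S letr_def m_def using io by simp
  have cs: "card (Ob \<pi>) = Suc m"
    using cnt_suc[OF p pm] cnt_min[OF p] b1 O(5) n_def m_def by (simp add: numeral_2_eq_2)
  have ph: "phi \<sigma> R \<epsilon> \<iota> \<pi> 1 = (if \<epsilon> 1 = EOne then opM (\<iota> 1) else opMstar (\<iota> 1))"
    unfolding phi_def by simp
  have res: "app (phi \<sigma> R \<epsilon> \<iota> \<pi> 1) [(coef \<sigma> \<iota> \<pi> 2, Wd R \<pi> \<epsilon> \<iota> 2)] = [(coef \<sigma> \<iota> \<pi> 2, [(\<iota> 1, colr (\<epsilon> 1), \<lambda>t. idf t ^ Suc m)])]"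
    using en by (cases "\<epsilon> 1"; cases "\<epsilon> n") (simp_all add: ph[simplified] W app_single colr_def)
  have int: "(LINT t|\<sigma> (\<iota> 1). idf t ^ Suc m * cnj 1) = mB \<sigma> \<iota> (Ob \<pi>)"
    unfolding integ_pow1 mB_def cs O(5) ..
  have fin1: "finner \<sigma> [(c, [(\<iota> 1, cc, \<lambda>t. idf t ^ Suc m)])] (eta (\<iota> 1)) = c * (LINT t|\<sigma> (\<iota> 1). idf t ^ Suc m * cnj 1)" for c cc
    by (cases cc) (simp_all add: finner_def eta_def winner_def linner_def)
  have "{B\<in>\<pi>. 2 \<le> Min B} = \<pi> - {Ob \<pi>}"
  proof (rule set_eqI, rule iffI)
    fix B assume B: "B \<in> {B\<in>\<pi>. 2 \<le> Min B}"
    then show "B \<in> \<pi> - {Ob \<pi>}" using O(5) by auto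
  next
    fix B assume B: "B \<in> \<pi> - {Ob \<pi>}"
    have "Min B \<in> B" using B Min_in[OF F(3)] blk_ne[OF irr blocks] by blast
    then have "Min B \<ge> 1" using B F(4) by fastforce
    moreover have "Min B \<noteq> 1" using B F(2) \<open>Min B \<in> B\<close> b1 by fastforce
    ultimately show "B \<in> {B\<in>\<pi>. 2 \<le> Min B}" using B by auto
  qed
  then have "coef \<sigma> \<iota> \<pi> 2 = (\<Prod>B\<in>\<pi> - {Ob \<pi>}. mB \<sigma> \<iota> B)" unfolding coef_def by simp
  then have "coef \<sigma> \<iota> \<pi> 2 * mB \<sigma> \<iota> (Ob \<pi>) = (\<Prod>B\<in>\<pi>. mB \<sigma> \<iota> B)"
    using prod.remove[OF fin_pi[OF irr blocks] O(1), of "mB \<sigma> \<iota>"] by (simp add: mult.commute)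
  then show ?thesis unfolding res fin1 int .
qed

lemma inv:
  "n \<le> R - 2 \<Longrightarrow> foldr (\<lambda>j w. app (phi \<sigma> R \<epsilon> \<iota> \<pi> j) w) [R - n..<R+1] (eta (\<iota> R)) = [(coef \<sigma> \<iota> \<pi> (R - n), Wd R \<pi> \<epsilon> \<iota> (R - n))]"
proof (induction n)
  case 0
  then show ?case using init by simp
next
  case (Suc n)
  have R2: "R \<ge> 2" using Obfacts[OF irr blocks] by simp
  have e: "Suc (R - Suc n) = R - n" using Suc.prems R2 by simp
  have "[R - Suc n..<R+1] = (R - Suc n) # [R - n..<R+1]" using Suc.prems R2
    by (metis e upt_conv_Cons less_Suc_eq_le diff_le_self add.commute plus_1_eq_Suc le_imp_less_Suc)
  moreover have "2 \<le> R - Suc n" "R - Suc n < R" using Suc.prems R2 by auto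
  ultimately show ?case using Suc.IH Suc.prems step[of "R - Suc n"] e by simp
qed

lemma rhs:
  "phi_prod \<sigma> R \<epsilon> \<iota> \<pi> (eta (\<iota> R)) = app (phi \<sigma> R \<epsilon> \<iota> \<pi> 1) [(coef \<sigma> \<iota> \<pi> 2, Wd R \<pi> \<epsilon> \<iota> 2)]"
proof -
  have R2: "R \<ge> 2" using Obfacts[OF irr blocks] by simp
  have "(1::nat) < R+1" using R2 by simp
  from upt_conv_Cons[OF this] have l: "[1..<R+1] = 1 # [2..<R+1]" unfolding Suc_1 .
  have d: "R - (R - 2) = 2" using R2 by simp
  have i: "foldr (\<lambda>j w. app (phi \<sigma> R \<epsilon> \<iota> \<pi> j) w) [2..<R+1] (eta (\<iota> R)) = [(coef \<sigma> \<iota> \<pi> 2, Wd R \<pi> \<epsilon> \<iota> 2)]"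
    using inv[of "R - 2"] unfolding d by simp
  show ?thesis unfolding phi_prod_def l foldr_Cons o_apply i ..
qed

end

theorem lemma4p2:
  fixes sc :: "complex \<Rightarrow> 'a::ring_1" and st :: "'a \<Rightarrow> 'a" and \<tau> :: "'a \<Rightarrow> complex"
    and \<kappa> :: "'a list \<Rightarrow> complex"
    and N :: nat and X :: "nat \<Rightarrow> 'a" and \<sigma> :: "nat \<Rightarrow> real measure"
    and R k :: nat and \<epsilon> :: "nat \<Rightarrow> epsilon" and \<iota> :: "nat \<Rightarrow> nat" and \<pi> :: "nat set set"
  assumes space: "tracial_star_prob_space sc st \<tau>"
    and cum: "free_cumulants \<tau> \<kappa>"
    and free: "star_free sc st \<tau> N X"
    and Rdiag: "\<forall>i\<in>{1..N}. R_diagonal st \<kappa> (X i)"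
    and sigma_sets: "\<forall>i\<in>{1..N}. sets (\<sigma> i) = sets borel"
    and sigma_fin: "\<forall>i\<in>{1..N}. finite_measure (\<sigma> i)"
    and sigma_cpt: "\<forall>i\<in>{1..N}. \<exists>S. compact S \<and> emeasure (\<sigma> i) (- S) = 0"
    and sigma_sym: "\<forall>i\<in>{1..N}. \<forall>A\<in>sets borel. emeasure (\<sigma> i) (uminus ` A) = emeasure (\<sigma> i) A"
    and cum_sigma: "\<forall>i\<in>{1..N}. \<forall>es. es \<noteq> [] \<and> cyc_alt es \<longrightarrow>
        \<kappa> (map (Xpow st (X i)) es) = complex_of_real (LINT t|\<sigma> i. t ^ length es)"
    and R_pos: "R \<ge> 1"
    and iota_range: "\<forall>j\<in>{1..R}. \<iota> j \<in> {1..N}"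
    and iota1: "\<iota> 1 = k" and iotaR: "\<iota> R = k"
    and irr: "NC_irr R \<pi>"
    and blocks: "\<forall>B\<in>\<pi>. (\<forall>q\<in>B. \<iota> q = \<iota> (Min B)) \<and> cyc_alt (map \<epsilon> (sorted_list_of_set B))"
  shows "kappa_pi \<kappa> \<pi> (\<lambda>j. Xpow st (X (\<iota> j)) (\<epsilon> j))
           = finner \<sigma> (phi_prod \<sigma> R \<epsilon> \<iota> \<pi> (eta k)) (eta k)"
proof -
  have lhs: "kappa_pi \<kappa> \<pi> (\<lambda>j. Xpow st (X (\<iota> j)) (\<epsilon> j)) = (\<Prod>B\<in>\<pi>. mB \<sigma> \<iota> B)"
    unfolding kappa_pi_def
  proof (rule prod.cong[OF refl])
    fix B assume B: "B \<in> \<pi>"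
    have fin: "finite B" using blk_fin[OF irr blocks B] .
    have ne: "B \<noteq> {}" using blk_ne[OF irr blocks B] .
    have mi: "Min B \<in> B" using Min_in[OF fin ne] .
    have i: "\<iota> (Min B) \<in> {1..N}" using iota_range blk_sub[OF irr blocks B] mi by blast
    have m: "map (\<lambda>j. Xpow st (X (\<iota> j)) (\<epsilon> j)) (sorted_list_of_set B)
        = map (Xpow st (X (\<iota> (Min B)))) (map \<epsilon> (sorted_list_of_set B))"
      using iota_blk[OF irr blocks B] fin by simp
    have es: "map \<epsilon> (sorted_list_of_set B) \<noteq> []" using fin ne by simp
    have ca: "cyc_alt (map \<epsilon> (sorted_list_of_set B))" using blocks B by blast
    show "\<kappa> (map (\<lambda>j. Xpow st (X (\<iota> j)) (\<epsilon> j)) (sorted_list_of_set B)) = mB \<sigma> \<iota> B"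
    proof -
      have "\<kappa> (map (Xpow st (X (\<iota> (Min B)))) (map \<epsilon> (sorted_list_of_set B)))
          = complex_of_real (LINT t|\<sigma> (\<iota> (Min B)). t ^ length (map \<epsilon> (sorted_list_of_set B)))"
        using cum_sigma i es ca by blast
      then show ?thesis unfolding m mB_def by simp
    qed
  qed
  have "finner \<sigma> (phi_prod \<sigma> R \<epsilon> \<iota> \<pi> (eta k)) (eta k)
      = finner \<sigma> (app (phi \<sigma> R \<epsilon> \<iota> \<pi> 1) [(coef \<sigma> \<iota> \<pi> 2, Wd R \<pi> \<epsilon> \<iota> 2)]) (eta (\<iota> 1))"
    using rhs[OF irr blocks, of \<sigma>] iota1 iotaR by simp
  also have "\<dots> = (\<Prod>B\<in>\<pi>. mB \<sigma> \<iota> B)" using final[OF irr blocks] .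
  finally show ?thesis using lhs by simp
qed

end
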